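(* Let $\mathbb{S}\subseteq\mathbb{R}$ be an interval and let $Q:\mathbb{S}\to\mathbb{R}$ be twice differentiable, with $q=Q'$, $f(z)=e^{Q(z)}$, $p(z)=1/(1+e^{-Q(z)})$ and $H(z)=\log(1+e^{Q(z)})$. If the matching loss $$\mathcal{L}_m(\hat s,s)=\log\big(1+e^{Q(\hat s)}\big)-\log\big(1+e^{Q(s)}\big)-(\hat s-s)\,q(s)\,p(s)$$ is convex in $\hat s$ over $\mathbb{S}$ (for all $s\in\mathbb{S}$), then $f'$ is non-decreasing on $\mathbb{S}$.
   Context: This is the case of regularization strength $\gamma=1$ of the composite Softplus primitive; $f$ is the score-transform function. *)

theory Defs
  imports "HOL-Analysis.Analysis"
begin

definition sp_p :: "(real \<Rightarrow> real) \<Rightarrow> real \<Rightarrow> real" where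
  "sp_p Q z = 1 / (1 + exp (- Q z))"

definition sp_H :: "(real \<Rightarrow> real) \<Rightarrow> real \<Rightarrow> real" where
  "sp_H Q z = ln (1 + exp (Q z))"

definition matching_loss ::
  "(real \<Rightarrow> real) \<Rightarrow> (real \<Rightarrow> real) \<Rightarrow> real \<Rightarrow> real \<Rightarrow> real" where
  "matching_loss Q q s_hat s = sp_H Q s_hat - sp_H Q s - (s_hat - s) * q s * sp_p Q s"

end

theory Submission
  imports Defs
begin

theorem corollaryG3:
  fixes S :: "real set" and Q q q' :: "real \<Rightarrow> real"
  assumes "is_interval S"
    and "\<And>z. z \<in> S \<Longrightarrow> (Q has_real_derivative q z) (at z within S)"
    and "\<And>z. z \<in> S \<Longrightarrow> (q has_real_derivative q' z) (at z within S)"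
    and "\<And>s. s \<in> S \<Longrightarrow> convex_on S (\<lambda>s_hat. matching_loss Q q s_hat s)"
  shows "\<forall>f'. (\<forall>z\<in>S. ((\<lambda>z. exp (Q z)) has_real_derivative f' z) (at z within S))
           \<longrightarrow> mono_on S f'"
proof (intro allI impI)
  fix f' assume f': "\<forall>z\<in>S. ((\<lambda>z. exp (Q z)) has_real_derivative f' z) (at z within S)"
  note iv = assms(1) and dQ = assms(2) and dq = assms(3) and cvx = assms(4)
  define h where "h z = q z * exp (Q z)" for z
  define g where "g z = q z * exp (Q z) / (1 + exp (Q z))" for z
  have dE: "((\<lambda>z. exp (Q z)) has_real_derivative exp (Q z) * q z) (at z within S)" if "z \<in> S" for z
    using dQ[OF that] by (auto intro!: derivative_eq_intros)
  have dh: "(h has_real_derivative exp (Q z) * (q' z + (q z)^2)) (at z within S)" if "z \<in> S" for z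
    unfolding h_def using dQ[OF that] dq[OF that]
    by (auto intro!: derivative_eq_intros simp: power2_eq_square algebra_simps)
  have dg: "(g has_real_derivative
      q' z * exp (Q z) / (1 + exp (Q z)) + (q z)^2 * exp (Q z) / (1 + exp (Q z))^2) (at z within S)"
    if "z \<in> S" for z
  proof -
    have "1 + exp (Q z) \<noteq> 0" by (smt (verit) exp_gt_zero)
    then show ?thesis
      unfolding g_def using dQ[OF that] dq[OF that]
      apply (auto intro!: derivative_eq_intros)
      apply (simp add: divide_simps)
      apply (simp add: algebra_simps power2_eq_square)
      done
  qed
  have dM: "((\<lambda>w. matching_loss Q q w s) has_real_derivative g w - q s * sp_p Q s) (at w within S)"
    if "w \<in> S" for w s
  proof -
    have "1 + exp (Q w) > 0" by (smt (verit) exp_gt_zero)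
    then show ?thesis
      unfolding matching_loss_def sp_H_def g_def using dQ[OF that]
      by (auto intro!: derivative_eq_intros simp: field_simps)
  qed
  have gmono: "g a \<le> g b" if "a \<in> interior S" "b \<in> interior S" "a < b" for a b
  proof -
    have aS: "a \<in> S" and bS: "b \<in> S" using that interior_subset by auto
    let ?M = "\<lambda>w. matching_loss Q q w a"
    have c: "convex_on S ?M" using cvx aS .
    have con: "connected S" using iv is_interval_connected by blast
    have 1: "?M b - ?M a \<ge> (g a - q a * sp_p Q a) * (b - a)"
      by (rule convex_on_imp_above_tangent[OF c con that(1) bS dM[OF aS]])
    have 2: "?M a - ?M b \<ge> (g b - q a * sp_p Q a) * (a - b)"
      by (rule convex_on_imp_above_tangent[OF c con that(2) aS dM[OF bS]])
    from 1 2 have "(g b - g a) * (b - a) \<ge> 0" by (simp add: algebra_simps)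
    with that(3) show ?thesis by (simp add: zero_le_mult_iff)
  qed
  have key: "q' z + (q z)^2 \<ge> 0" if z: "z \<in> interior S" for z
  proof -
    have zS: "z \<in> S" using z interior_subset by auto
    define E where "E = exp (Q z)"
    have E: "E > 0" unfolding E_def by simp
    define l where "l = q' z * E / (1 + E) + (q z)^2 * E / (1 + E)^2"
    have D: "DERIV g z :> l" using dg[OF zS] at_within_interior[OF z] unfolding l_def E_def by simp
    have "l \<ge> 0"
    proof (rule ccontr)
      assume "\<not> l \<ge> 0"
      then obtain d where d: "d > 0" "\<forall>h>0. h < d \<longrightarrow> g z > g (z + h)"
        using DERIV_neg_dec_right[OF D] by force
      obtain e where e: "e > 0" "ball z e \<subseteq> interior S"
        using z open_interior open_contains_ball by blast
      define t where "t = min d e / 2"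
      have t: "t > 0" "t < d" "t < e" using d e unfolding t_def by auto
      have "z + t \<in> interior S" using e t by (auto simp: dist_real_def)
      then have "g z \<le> g (z + t)" using gmono z t by simp
      with d t show False by force
    qed
    then have "0 \<le> l * (1 + E)^2 / E" using E by simp
    also have "l * (1 + E)^2 / E = q' z * (1 + E) + (q z)^2"
    proof -
      have "1 + E \<noteq> 0" using E by simp
      then show ?thesis unfolding l_def using E
        by (simp add: divide_simps) (simp add: algebra_simps power2_eq_square)
    qed
    finally have "0 \<le> q' z * (1 + E) + (q z)^2" .
    moreover have "(q z)^2 \<ge> 0" by simp
    moreover have "q' z < 0 \<Longrightarrow> q' z * (1 + E) \<le> q' z"
    proof -
      assume "q' z < 0"
      then have "E * q' z < 0" using mult_pos_neg[OF E] by simp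
      moreover have "q' z * (1 + E) = q' z + E * q' z" by (simp add: distrib_left)
      ultimately show ?thesis by linarith
    qed
    ultimately show ?thesis by (smt (verit))
  qed
  show "mono_on S f'"
  proof (rule mono_onI)
    fix x y assume xy: "x \<in> S" "y \<in> S" "x \<le> y"
    show "f' x \<le> f' y"
    proof (cases "x = y")
      case True then show ?thesis by simp
    next
      case False
      with xy have lt: "x < y" by simp
      have sub: "{x..y} \<subseteq> S"
      proof
        fix z assume "z \<in> {x..y}"
        then have "x \<le> z" "z \<le> y" by auto
        then show "z \<in> S" using iv xy(1,2) unfolding is_interval_1 by blast
      qed
      have fx: "f' x = h x"
      proof (rule has_field_derivative_unique)
        show "((\<lambda>z. exp (Q z)) has_field_derivative f' x) (at x within {x..y})"
          by (rule has_field_derivative_subset[OF f'[rule_format, OF xy(1)] sub])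
        show "((\<lambda>z. exp (Q z)) has_field_derivative h x) (at x within {x..y})"
          using dE[OF xy(1)] has_field_derivative_subset sub unfolding h_def by (simp add: mult.commute)
        show "at x within {x..y} \<noteq> bot" using lt by (simp add: at_within_Icc_at_right)
      qed
      have fy: "f' y = h y"
      proof (rule has_field_derivative_unique)
        show "((\<lambda>z. exp (Q z)) has_field_derivative f' y) (at y within {x..y})"
          by (rule has_field_derivative_subset[OF f'[rule_format, OF xy(2)] sub])
        show "((\<lambda>z. exp (Q z)) has_field_derivative h y) (at y within {x..y})"
          using dE[OF xy(2)] has_field_derivative_subset sub unfolding h_def by (simp add: mult.commute)
        show "at y within {x..y} \<noteq> bot" using lt by (simp add: at_within_Icc_at_left)
      qed
      have "h x \<le> h y"
      proof (rule DERIV_nonneg_imp_increasing_open[OF xy(3)])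
        fix z assume z: "x < z" "z < y"
        have "{x<..<y} \<subseteq> S" using sub by auto
        then have zi: "z \<in> interior S" using z by (meson greaterThanLessThan_iff interior_maximal open_greaterThanLessThan subsetD)
        have "DERIV h z :> exp (Q z) * (q' z + (q z)^2)"
          using dh[of z] zi interior_subset at_within_interior[OF zi] by auto
        moreover have "exp (Q z) * (q' z + (q z)^2) \<ge> 0" using key[OF zi] by simp
        ultimately show "\<exists>l. DERIV h z :> l \<and> 0 \<le> l" by blast
      next
        have "continuous_on S h"
          using dh by (metis DERIV_continuous continuous_on_eq_continuous_within)
        then show "continuous_on {x..y} h" using continuous_on_subset sub by blast
      qed
      then show ?thesis using fx fy by simp
    qed
  qed
qed

end
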